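(* Let $G$ be a group, $A$ a semilattice of groups and $\Theta=(\theta,w)$ a twisted partial action of $G$ on $A$. Then $A*_\Theta G$, with $i(a)=a\delta_1$ and $j(a\delta_x)=x$, is an extension of $A$ by $G$. Moreover, the maps $\pi:A*_\Theta G\to E(A)*_\theta G$, $\pi(a\delta_x)=aa^{-1}\delta_x$, and $\kappa:E(A)*_\theta G\to G$, $\kappa(e\delta_x)=x$, are epimorphisms such that $A\overset{i}{\to}A*_\Theta G\overset{\pi}{\to}E(A)*_\theta G$ is an extension of $A$ by $E(A)*_\theta G$ and $j=\kappa\circ\pi$ (so $E(A)*_\theta G$ is, up to isomorphism, the $E$-unitary inverse semigroup associated with the extension $A*_\Theta G$ of $A$ by $G$).
   Context: A semilattice of groups is an inverse semigroup $A$ with central idempotents. A multiplier of a semigroup $T$ is a pair $(L,R)$ of maps $T\to T$ with $L(st)=L(s)t$, $R(st)=sR(t)$, $sL(t)=R(s)t$, written $ws=L(s)$, $sw=R(s)$; they form a monoid $\mathcal M(T)$ with unit group $\mathcal U(\mathcal M(T))$. A twisted partial action of $G$ on $A$ is $\Theta=(\theta,w)$ with isomorphisms $\theta_x:D_{x^{-1}}\to D_x$ between nonempty ideals and $w_{x,y}\in\mathcal U(\mathcal M(D_xD_{xy}))$ such that (i) $D_x^2=D_x$, $D_xD_y=D_yD_x$; (ii) $D_1=A$, $\theta_1=\mathrm{id}$; (iii) $\theta_x(D_{x^{-1}}D_y)=D_xD_{xy}$; (iv) $\theta_x\theta_y(s)=w_{x,y}\theta_{xy}(s)w_{x,y}^{-1}$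 for $s\in D_{y^{-1}}D_{y^{-1}x^{-1}}$; (v) $w_{1,x}=w_{x,1}$ = identity of $D_x$; (vi) $\theta_x(sw_{y,z})w_{x,yz}=\theta_x(s)w_{x,y}w_{xy,z}$ for $s\in D_{x^{-1}}D_yD_{yz}$. The crossed product $A*_\Theta G=\{a\delta_x: a\in D_x\}$ has product $a\delta_x\cdot b\delta_y=\theta_x(\theta_x^{-1}(a)b)w_{x,y}\delta_{xy}$. The maps $\theta_x$ restrict to isomorphisms $E(D_{x^{-1}})\to E(D_x)$ forming a partial action $\theta$ of $G$ on $E(A)$, and $E(A)*_\theta G=\{e\delta_x: e\in E(D_x)\}$ with $e\delta_x\cdot f\delta_y=\theta_x(\theta_x^{-1}(e)f)\delta_{xy}$. An extension of $A$ by a group $G$: inverse semigroup $U$, monomorphism $i:A\to U$, epimorphism $j:U\to G$ with $i(A)=j^{-1}(1)$. An extension of $A$ by an inverse semigroup $S$: inverse semigroup $U$, monomorphism $i:A\to U$, idempotent-separating epimorphism $\pi:U\to S$ with $i(A)=\pi^{-1}(E(S))$. *)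

theory Defs
  imports "HOL-Algebra.Coset"
begin

(* Inverse semigroups are represented as HOL-Algebra monoid records (the field one is ignored). *)

definition sgrp :: "('a,'b) monoid_scheme \<Rightarrow> bool" where
  "sgrp S \<longleftrightarrow> (\<forall>x\<in>carrier S. \<forall>y\<in>carrier S. x \<otimes>\<^bsub>S\<^esub> y \<in> carrier S) \<and>
     (\<forall>x\<in>carrier S. \<forall>y\<in>carrier S. \<forall>z\<in>carrier S.
        x \<otimes>\<^bsub>S\<^esub> y \<otimes>\<^bsub>S\<^esub> z = x \<otimes>\<^bsub>S\<^esub> (y \<otimes>\<^bsub>S\<^esub> z))"

definition inverse_semigroup :: "('a,'b) monoid_scheme \<Rightarrow> bool" where
  "inverse_semigroup S \<longleftrightarrow> sgrp S \<and>
     (\<forall>a\<in>carrier S. \<exists>!b. b \<in> carrier S \<and> a \<otimes>\<^bsub>S\<^esub> b \<otimes>\<^bsub>S\<^esub> a = a \<and> b \<otimes>\<^bsub>S\<^esub> a \<otimes>\<^bsub>S\<^esub> b = b)"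

definition sinv :: "('a,'b) monoid_scheme \<Rightarrow> 'a \<Rightarrow> 'a" where
  "sinv S a = (THE b. b \<in> carrier S \<and> a \<otimes>\<^bsub>S\<^esub> b \<otimes>\<^bsub>S\<^esub> a = a \<and> b \<otimes>\<^bsub>S\<^esub> a \<otimes>\<^bsub>S\<^esub> b = b)"

definition idems :: "('a,'b) monoid_scheme \<Rightarrow> 'a set" where
  "idems S = {e \<in> carrier S. e \<otimes>\<^bsub>S\<^esub> e = e}"

definition semilattice_of_groups :: "('a,'b) monoid_scheme \<Rightarrow> bool" where
  "semilattice_of_groups S \<longleftrightarrow> inverse_semigroup S \<and>
     (\<forall>e\<in>idems S. \<forall>a\<in>carrier S. e \<otimes>\<^bsub>S\<^esub> a = a \<otimes>\<^bsub>S\<^esub> e)"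

definition sg_ideal :: "('a,'b) monoid_scheme \<Rightarrow> 'a set \<Rightarrow> bool" where
  "sg_ideal S I \<longleftrightarrow> I \<noteq> {} \<and> I \<subseteq> carrier S \<and>
     (\<forall>s\<in>carrier S. \<forall>a\<in>I. s \<otimes>\<^bsub>S\<^esub> a \<in> I \<and> a \<otimes>\<^bsub>S\<^esub> s \<in> I)"

(* multiplier (L,R) of the subsemigroup T; w s = L s, s w = R s *)
definition multiplier :: "('a,'b) monoid_scheme \<Rightarrow> 'a set \<Rightarrow> ('a \<Rightarrow> 'a) \<times> ('a \<Rightarrow> 'a) \<Rightarrow> bool" where
  "multiplier S T w \<longleftrightarrow> fst w \<in> T \<rightarrow> T \<and> snd w \<in> T \<rightarrow> T \<and>
     (\<forall>s\<in>T. \<forall>t\<in>T. fst w (s \<otimes>\<^bsub>S\<^esub> t) = fst w s \<otimes>\<^bsub>S\<^esub> t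
                  \<and> snd w (s \<otimes>\<^bsub>S\<^esub> t) = s \<otimes>\<^bsub>S\<^esub> snd w t
                  \<and> s \<otimes>\<^bsub>S\<^esub> fst w t = snd w s \<otimes>\<^bsub>S\<^esub> t)"

(* Product in M(T): (w w') s = w (w' s), s (w w') = (s w) w'.  Identity: (id,id).
   w is a unit iff it has a two-sided inverse multiplier. *)
definition unit_multiplier :: "('a,'b) monoid_scheme \<Rightarrow> 'a set \<Rightarrow> ('a \<Rightarrow> 'a) \<times> ('a \<Rightarrow> 'a) \<Rightarrow> bool" where
  "unit_multiplier S T w \<longleftrightarrow> multiplier S T w \<and>
     (\<exists>w'. multiplier S T w' \<and>
        (\<forall>s\<in>T. fst w (fst w' s) = s \<and> fst w' (fst w s) = s \<and>
                snd w (snd w' s) = s \<and> snd w' (snd w s) = s))"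

(* right action of the inverse multiplier w^{-1} on T:  s w^{-1} *)
definition mult_rinv :: "'a set \<Rightarrow> ('a \<Rightarrow> 'a) \<times> ('a \<Rightarrow> 'a) \<Rightarrow> 'a \<Rightarrow> 'a" where
  "mult_rinv T w = inv_into T (snd w)"

definition twisted_partial_action ::
  "('g,'c) monoid_scheme \<Rightarrow> ('a,'b) monoid_scheme \<Rightarrow> ('g \<Rightarrow> 'a set) \<Rightarrow> ('g \<Rightarrow> 'a \<Rightarrow> 'a)
     \<Rightarrow> ('g \<Rightarrow> 'g \<Rightarrow> ('a \<Rightarrow> 'a) \<times> ('a \<Rightarrow> 'a)) \<Rightarrow> bool" where
  "twisted_partial_action G A D \<theta> w \<longleftrightarrow>
     (\<forall>x\<in>carrier G. sg_ideal A (D x)) \<and>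
     (\<forall>x\<in>carrier G. bij_betw (\<theta> x) (D (inv\<^bsub>G\<^esub> x)) (D x) \<and>
        (\<forall>a\<in>D (inv\<^bsub>G\<^esub> x). \<forall>b\<in>D (inv\<^bsub>G\<^esub> x). \<theta> x (a \<otimes>\<^bsub>A\<^esub> b) = \<theta> x a \<otimes>\<^bsub>A\<^esub> \<theta> x b)) \<and>
     (\<forall>x\<in>carrier G. \<forall>y\<in>carrier G. unit_multiplier A (D x <#>\<^bsub>A\<^esub> D (x \<otimes>\<^bsub>G\<^esub> y)) (w x y)) \<and>
     \<comment> \<open>(i)\<close>
     (\<forall>x\<in>carrier G. D x <#>\<^bsub>A\<^esub> D x = D x) \<and>
     (\<forall>x\<in>carrier G. \<forall>y\<in>carrier G. D x <#>\<^bsub>A\<^esub> D y = D y <#>\<^bsub>A\<^esub> D x) \<and>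
     \<comment> \<open>(ii)\<close>
     D \<one>\<^bsub>G\<^esub> = carrier A \<and> (\<forall>a\<in>carrier A. \<theta> \<one>\<^bsub>G\<^esub> a = a) \<and>
     \<comment> \<open>(iii)\<close>
     (\<forall>x\<in>carrier G. \<forall>y\<in>carrier G.
        \<theta> x ` (D (inv\<^bsub>G\<^esub> x) <#>\<^bsub>A\<^esub> D y) = D x <#>\<^bsub>A\<^esub> D (x \<otimes>\<^bsub>G\<^esub> y)) \<and>
     \<comment> \<open>(iv)\<close>
     (\<forall>x\<in>carrier G. \<forall>y\<in>carrier G.
        \<forall>s\<in>D (inv\<^bsub>G\<^esub> y) <#>\<^bsub>A\<^esub> D (inv\<^bsub>G\<^esub> y \<otimes>\<^bsub>G\<^esub> inv\<^bsub>G\<^esub> x).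
          \<theta> x (\<theta> y s) =
            mult_rinv (D x <#>\<^bsub>A\<^esub> D (x \<otimes>\<^bsub>G\<^esub> y)) (w x y) (fst (w x y) (\<theta> (x \<otimes>\<^bsub>G\<^esub> y) s))) \<and>
     \<comment> \<open>(v)\<close>
     (\<forall>x\<in>carrier G. \<forall>s\<in>D x.
        fst (w \<one>\<^bsub>G\<^esub> x) s = s \<and> snd (w \<one>\<^bsub>G\<^esub> x) s = s \<and>
        fst (w x \<one>\<^bsub>G\<^esub>) s = s \<and> snd (w x \<one>\<^bsub>G\<^esub>) s = s) \<and>
     \<comment> \<open>(vi)\<close>
     (\<forall>x\<in>carrier G. \<forall>y\<in>carrier G. \<forall>z\<in>carrier G.
        \<forall>s\<in>D (inv\<^bsub>G\<^esub> x) <#>\<^bsub>A\<^esub> D y <#>\<^bsub>A\<^esub> D (y \<otimes>\<^bsub>G\<^esub> z).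
          snd (w x (y \<otimes>\<^bsub>G\<^esub> z)) (\<theta> x (snd (w y z) s)) =
          snd (w (x \<otimes>\<^bsub>G\<^esub> y) z) (snd (w x y) (\<theta> x s)))"

(* crossed product A *_Theta G; the pair (a,x) stands for a delta_x *)
definition crossed_product ::
  "('g,'c) monoid_scheme \<Rightarrow> ('a,'b) monoid_scheme \<Rightarrow> ('g \<Rightarrow> 'a set) \<Rightarrow> ('g \<Rightarrow> 'a \<Rightarrow> 'a)
     \<Rightarrow> ('g \<Rightarrow> 'g \<Rightarrow> ('a \<Rightarrow> 'a) \<times> ('a \<Rightarrow> 'a)) \<Rightarrow> ('a \<times> 'g) monoid" where
  "crossed_product G A D \<theta> w =
     \<lparr> carrier = {(a, x). x \<in> carrier G \<and> a \<in> D x},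
       mult = (\<lambda>(a, x) (b, y).
          (snd (w x y) (\<theta> x (inv_into (D (inv\<^bsub>G\<^esub> x)) (\<theta> x) a \<otimes>\<^bsub>A\<^esub> b)), x \<otimes>\<^bsub>G\<^esub> y)),
       one = undefined \<rparr>"

definition idem_crossed_product ::
  "('g,'c) monoid_scheme \<Rightarrow> ('a,'b) monoid_scheme \<Rightarrow> ('g \<Rightarrow> 'a set) \<Rightarrow> ('g \<Rightarrow> 'a \<Rightarrow> 'a)
     \<Rightarrow> ('a \<times> 'g) monoid" where
  "idem_crossed_product G A D \<theta> =
     \<lparr> carrier = {(e, x). x \<in> carrier G \<and> e \<in> D x \<inter> idems A},
       mult = (\<lambda>(e, x) (f, y).
          (\<theta> x (inv_into (D (inv\<^bsub>G\<^esub> x)) (\<theta> x) e \<otimes>\<^bsub>A\<^esub> f), x \<otimes>\<^bsub>G\<^esub> y)),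
       one = undefined \<rparr>"

definition monomorphism where
  "monomorphism S T h \<longleftrightarrow> h \<in> hom S T \<and> inj_on h (carrier S)"

definition epimorphism where
  "epimorphism S T h \<longleftrightarrow> h \<in> hom S T \<and> h ` carrier S = carrier T"

definition group_extension ::
  "('a,'b) monoid_scheme \<Rightarrow> ('u,'d) monoid_scheme \<Rightarrow> ('g,'c) monoid_scheme
     \<Rightarrow> ('a \<Rightarrow> 'u) \<Rightarrow> ('u \<Rightarrow> 'g) \<Rightarrow> bool" where
  "group_extension A U G i j \<longleftrightarrow> inverse_semigroup U \<and> group G \<and>
     monomorphism A U i \<and> epimorphism U G j \<and>
     i ` carrier A = {u \<in> carrier U. j u = \<one>\<^bsub>G\<^esub>}"

definition semigroup_extension ::
  "('a,'b) monoid_scheme \<Rightarrow> ('u,'d) monoid_scheme \<Rightarrow> ('s,'e) monoid_scheme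
     \<Rightarrow> ('a \<Rightarrow> 'u) \<Rightarrow> ('u \<Rightarrow> 's) \<Rightarrow> bool" where
  "semigroup_extension A U S i p \<longleftrightarrow> inverse_semigroup U \<and> inverse_semigroup S \<and>
     monomorphism A U i \<and> epimorphism U S p \<and> inj_on p (idems U) \<and>
     i ` carrier A = {u \<in> carrier U. p u \<in> idems S}"

end

theory Submission
  imports Defs
begin


lemma inv_sgI:
  assumes sg: "sgrp S" and reg: "\<And>a. a \<in> carrier S \<Longrightarrow> \<exists>b\<in>carrier S. a \<otimes>\<^bsub>S\<^esub> b \<otimes>\<^bsub>S\<^esub> a = a"
    and com: "\<And>e f. e \<in> idems S \<Longrightarrow> f \<in> idems S \<Longrightarrow> e \<otimes>\<^bsub>S\<^esub> f = f \<otimes>\<^bsub>S\<^esub> e"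
  shows "inverse_semigroup S"
proof -
  have cl: "\<And>x y. x \<in> carrier S \<Longrightarrow> y \<in> carrier S \<Longrightarrow> x \<otimes>\<^bsub>S\<^esub> y \<in> carrier S"
    using sg unfolding sgrp_def by blast
  have as: "\<And>x y z. x \<in> carrier S \<Longrightarrow> y \<in> carrier S \<Longrightarrow> z \<in> carrier S \<Longrightarrow>
     x \<otimes>\<^bsub>S\<^esub> y \<otimes>\<^bsub>S\<^esub> z = x \<otimes>\<^bsub>S\<^esub> (y \<otimes>\<^bsub>S\<^esub> z)"
    using sg unfolding sgrp_def by blast
  have idm: "\<And>a b. a \<in> carrier S \<Longrightarrow> b \<in> carrier S \<Longrightarrow> b \<otimes>\<^bsub>S\<^esub> a \<otimes>\<^bsub>S\<^esub> b = b \<Longrightarrow>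
      b \<otimes>\<^bsub>S\<^esub> a \<in> idems S \<and> a \<otimes>\<^bsub>S\<^esub> b \<in> idems S"
  proof -
    fix a b assume a: "a \<in> carrier S" and b: "b \<in> carrier S" and bab: "b \<otimes>\<^bsub>S\<^esub> a \<otimes>\<^bsub>S\<^esub> b = b"
    have "b \<otimes>\<^bsub>S\<^esub> a \<otimes>\<^bsub>S\<^esub> (b \<otimes>\<^bsub>S\<^esub> a) = b \<otimes>\<^bsub>S\<^esub> a \<otimes>\<^bsub>S\<^esub> b \<otimes>\<^bsub>S\<^esub> a"
      using a b by (simp add: as cl)
    moreover have "a \<otimes>\<^bsub>S\<^esub> b \<otimes>\<^bsub>S\<^esub> (a \<otimes>\<^bsub>S\<^esub> b) = a \<otimes>\<^bsub>S\<^esub> (b \<otimes>\<^bsub>S\<^esub> a \<otimes>\<^bsub>S\<^esub> b)"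
      using a b by (simp add: as cl)
    ultimately show "b \<otimes>\<^bsub>S\<^esub> a \<in> idems S \<and> a \<otimes>\<^bsub>S\<^esub> b \<in> idems S"
      using bab a b cl unfolding idems_def by auto
  qed
  show ?thesis unfolding inverse_semigroup_def
  proof (intro conjI sg ballI)
    fix a assume a: "a \<in> carrier S"
    obtain b0 where b0: "b0 \<in> carrier S" "a \<otimes>\<^bsub>S\<^esub> b0 \<otimes>\<^bsub>S\<^esub> a = a" using reg a by blast
    let ?b = "b0 \<otimes>\<^bsub>S\<^esub> a \<otimes>\<^bsub>S\<^esub> b0"
    have bS: "?b \<in> carrier S" using cl a b0 by blast
    have "a \<otimes>\<^bsub>S\<^esub> ?b \<otimes>\<^bsub>S\<^esub> a = (a \<otimes>\<^bsub>S\<^esub> b0 \<otimes>\<^bsub>S\<^esub> a) \<otimes>\<^bsub>S\<^esub> b0 \<otimes>\<^bsub>S\<^esub> a"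
      using a b0(1) by (simp add: as cl)
    then have 1: "a \<otimes>\<^bsub>S\<^esub> ?b \<otimes>\<^bsub>S\<^esub> a = a" using b0 by simp
    have "?b \<otimes>\<^bsub>S\<^esub> a \<otimes>\<^bsub>S\<^esub> ?b = b0 \<otimes>\<^bsub>S\<^esub> (a \<otimes>\<^bsub>S\<^esub> b0 \<otimes>\<^bsub>S\<^esub> a) \<otimes>\<^bsub>S\<^esub> (b0 \<otimes>\<^bsub>S\<^esub> a \<otimes>\<^bsub>S\<^esub> b0)"
      using a b0(1) by (simp add: as cl)
    also have "\<dots> = b0 \<otimes>\<^bsub>S\<^esub> a \<otimes>\<^bsub>S\<^esub> (b0 \<otimes>\<^bsub>S\<^esub> a \<otimes>\<^bsub>S\<^esub> b0)"
      using b0 by simp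
    also have "\<dots> = b0 \<otimes>\<^bsub>S\<^esub> (a \<otimes>\<^bsub>S\<^esub> b0 \<otimes>\<^bsub>S\<^esub> a) \<otimes>\<^bsub>S\<^esub> b0"
      using a b0(1) by (simp add: as cl)
    finally have 2: "?b \<otimes>\<^bsub>S\<^esub> a \<otimes>\<^bsub>S\<^esub> ?b = ?b" using b0 by simp
    show "\<exists>!b. b \<in> carrier S \<and> a \<otimes>\<^bsub>S\<^esub> b \<otimes>\<^bsub>S\<^esub> a = a \<and> b \<otimes>\<^bsub>S\<^esub> a \<otimes>\<^bsub>S\<^esub> b = b"
    proof (rule ex_ex1I)
      show "\<exists>b. b \<in> carrier S \<and> a \<otimes>\<^bsub>S\<^esub> b \<otimes>\<^bsub>S\<^esub> a = a \<and> b \<otimes>\<^bsub>S\<^esub> a \<otimes>\<^bsub>S\<^esub> b = b"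
        using bS 1 2 by blast
    next
      fix b c assume B: "b \<in> carrier S \<and> a \<otimes>\<^bsub>S\<^esub> b \<otimes>\<^bsub>S\<^esub> a = a \<and> b \<otimes>\<^bsub>S\<^esub> a \<otimes>\<^bsub>S\<^esub> b = b"
        and C: "c \<in> carrier S \<and> a \<otimes>\<^bsub>S\<^esub> c \<otimes>\<^bsub>S\<^esub> a = a \<and> c \<otimes>\<^bsub>S\<^esub> a \<otimes>\<^bsub>S\<^esub> c = c"
      have b: "b \<in> carrier S" and c: "c \<in> carrier S" using B C by auto
      have e1: "b \<otimes>\<^bsub>S\<^esub> a \<otimes>\<^bsub>S\<^esub> (c \<otimes>\<^bsub>S\<^esub> a) = c \<otimes>\<^bsub>S\<^esub> a \<otimes>\<^bsub>S\<^esub> (b \<otimes>\<^bsub>S\<^esub> a)"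
        using com idm a B C by blast
      have e2: "a \<otimes>\<^bsub>S\<^esub> b \<otimes>\<^bsub>S\<^esub> (a \<otimes>\<^bsub>S\<^esub> c) = a \<otimes>\<^bsub>S\<^esub> c \<otimes>\<^bsub>S\<^esub> (a \<otimes>\<^bsub>S\<^esub> b)"
        using com idm a B C by blast
      have "b = b \<otimes>\<^bsub>S\<^esub> (a \<otimes>\<^bsub>S\<^esub> c \<otimes>\<^bsub>S\<^esub> a) \<otimes>\<^bsub>S\<^esub> b" using B C by simp
      also have "\<dots> = b \<otimes>\<^bsub>S\<^esub> a \<otimes>\<^bsub>S\<^esub> (c \<otimes>\<^bsub>S\<^esub> a) \<otimes>\<^bsub>S\<^esub> b" using a b c by (simp add: as cl)
      also have "\<dots> = c \<otimes>\<^bsub>S\<^esub> a \<otimes>\<^bsub>S\<^esub> (b \<otimes>\<^bsub>S\<^esub> a) \<otimes>\<^bsub>S\<^esub> b" using e1 by simp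
      also have "\<dots> = c \<otimes>\<^bsub>S\<^esub> a \<otimes>\<^bsub>S\<^esub> (b \<otimes>\<^bsub>S\<^esub> a \<otimes>\<^bsub>S\<^esub> b)" using a b c by (simp add: as cl)
      finally have 3: "b = c \<otimes>\<^bsub>S\<^esub> a \<otimes>\<^bsub>S\<^esub> b" using B by simp
      have "c = c \<otimes>\<^bsub>S\<^esub> (a \<otimes>\<^bsub>S\<^esub> b \<otimes>\<^bsub>S\<^esub> a) \<otimes>\<^bsub>S\<^esub> c" using B C by simp
      also have "\<dots> = c \<otimes>\<^bsub>S\<^esub> (a \<otimes>\<^bsub>S\<^esub> b \<otimes>\<^bsub>S\<^esub> (a \<otimes>\<^bsub>S\<^esub> c))" using a b c by (simp add: as cl)
      also have "\<dots> = c \<otimes>\<^bsub>S\<^esub> (a \<otimes>\<^bsub>S\<^esub> c \<otimes>\<^bsub>S\<^esub> (a \<otimes>\<^bsub>S\<^esub> b))" using e2 by simp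
      also have "\<dots> = (c \<otimes>\<^bsub>S\<^esub> a \<otimes>\<^bsub>S\<^esub> c) \<otimes>\<^bsub>S\<^esub> a \<otimes>\<^bsub>S\<^esub> b" using a b c by (simp add: as cl)
      finally have 4: "c = c \<otimes>\<^bsub>S\<^esub> a \<otimes>\<^bsub>S\<^esub> b" using C by simp
      show "b = c" using 3 4 by simp
    qed
  qed
qed

locale cliff =
  fixes A :: "('a,'b) monoid_scheme"
  assumes slg: "semilattice_of_groups A"
begin

abbreviation am (infixl "\<cdot>" 70) where "a \<cdot> b \<equiv> a \<otimes>\<^bsub>A\<^esub> b"
abbreviation si where "si a \<equiv> sinv A a"

lemma closed[intro,simp]: "a \<in> carrier A \<Longrightarrow> b \<in> carrier A \<Longrightarrow> a \<cdot> b \<in> carrier A"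
  using slg unfolding semilattice_of_groups_def inverse_semigroup_def sgrp_def by blast

lemma assoc: "a \<in> carrier A \<Longrightarrow> b \<in> carrier A \<Longrightarrow> c \<in> carrier A \<Longrightarrow> a \<cdot> b \<cdot> c = a \<cdot> (b \<cdot> c)"
  using slg unfolding semilattice_of_groups_def inverse_semigroup_def sgrp_def by blast

lemma ex1: "a \<in> carrier A \<Longrightarrow> \<exists>!b. b \<in> carrier A \<and> a \<cdot> b \<cdot> a = a \<and> b \<cdot> a \<cdot> b = b"
  using slg unfolding semilattice_of_groups_def inverse_semigroup_def by blast

lemma si: "a \<in> carrier A \<Longrightarrow> si a \<in> carrier A \<and> a \<cdot> si a \<cdot> a = a \<and> si a \<cdot> a \<cdot> si a = si a"
  unfolding sinv_def by (rule theI'[OF ex1])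

lemma si_closed[intro,simp]: "a \<in> carrier A \<Longrightarrow> si a \<in> carrier A" using si by blast

lemma si_unique: "a \<in> carrier A \<Longrightarrow> b \<in> carrier A \<Longrightarrow> a \<cdot> b \<cdot> a = a \<Longrightarrow> b \<cdot> a \<cdot> b = b \<Longrightarrow> si a = b"
  unfolding sinv_def by (rule the1_equality[OF ex1]) auto

lemma central: "e \<in> carrier A \<Longrightarrow> e \<cdot> e = e \<Longrightarrow> a \<in> carrier A \<Longrightarrow> e \<cdot> a = a \<cdot> e"
  using slg unfolding semilattice_of_groups_def idems_def by blast

lemma sisi1: "a \<in> carrier A \<Longrightarrow> a \<cdot> (si a \<cdot> a) = a" using si assoc by metis
lemma sisi2: "a \<in> carrier A \<Longrightarrow> si a \<cdot> (a \<cdot> si a) = si a" using si assoc by metis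

lemma idem1: "a \<in> carrier A \<Longrightarrow> a \<cdot> si a \<cdot> (a \<cdot> si a) = a \<cdot> si a"
  by (metis assoc closed si si_closed)
lemma idem2: "a \<in> carrier A \<Longrightarrow> si a \<cdot> a \<cdot> (si a \<cdot> a) = si a \<cdot> a"
  by (metis assoc closed si si_closed)

lemma comm: "a \<in> carrier A \<Longrightarrow> a \<cdot> si a = si a \<cdot> a"
proof -
  assume a: "a \<in> carrier A"
  let ?e = "a \<cdot> si a" and ?f = "si a \<cdot> a"
  have e: "?e = ?f \<cdot> ?e"
  proof -
    have "?e = a \<cdot> ?f \<cdot> si a" using a by (simp add: assoc sisi1)
    also have "\<dots> = ?f \<cdot> a \<cdot> si a" using a central[OF _ idem2[OF a], of a] by simp
    also have "\<dots> = ?f \<cdot> ?e" using a by (simp add: assoc)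
    finally show ?thesis .
  qed
  have f: "?f = ?e \<cdot> ?f"
  proof -
    have "?f = si a \<cdot> ?e \<cdot> a" using a by (simp add: assoc sisi1)
    also have "\<dots> = ?e \<cdot> si a \<cdot> a" using a central[OF _ idem1[OF a], of "si a"] by simp
    also have "\<dots> = ?e \<cdot> ?f" using a by (simp add: assoc)
    finally show ?thesis .
  qed
  show ?thesis using e f central[OF _ idem1[OF a], of ?f] a by simp
qed

lemma left_unit: "a \<in> carrier A \<Longrightarrow> a \<cdot> si a \<cdot> a = a" using si by blast
lemma right_unit: "a \<in> carrier A \<Longrightarrow> a \<cdot> (a \<cdot> si a) = a" using sisi1 comm by metis
lemma left_unit': "a \<in> carrier A \<Longrightarrow> a \<cdot> si a \<cdot> (a \<cdot> b) = a \<cdot> b" if "b \<in> carrier A"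
  using that by (metis assoc closed si si_closed)

lemma si_si: "a \<in> carrier A \<Longrightarrow> si (si a) = a"
  by (rule si_unique) (use si in auto)

lemma si_idem: "e \<in> carrier A \<Longrightarrow> e \<cdot> e = e \<Longrightarrow> si e = e"
  by (rule si_unique) auto

lemma idem_mult: "e \<in> carrier A \<Longrightarrow> e \<cdot> e = e \<Longrightarrow> f \<in> carrier A \<Longrightarrow> f \<cdot> f = f \<Longrightarrow> e \<cdot> f \<cdot> (e \<cdot> f) = e \<cdot> f"
  by (metis assoc central closed)

lemma si_mult: "a \<in> carrier A \<Longrightarrow> b \<in> carrier A \<Longrightarrow> si (a \<cdot> b) = si b \<cdot> si a"
proof (rule si_unique)
  assume a: "a \<in> carrier A" and b: "b \<in> carrier A"
  have cb: "\<And>x. x \<in> carrier A \<Longrightarrow> b \<cdot> si b \<cdot> x = x \<cdot> (b \<cdot> si b)" using central idem1 b by auto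
  have ca: "\<And>x. x \<in> carrier A \<Longrightarrow> si a \<cdot> a \<cdot> x = x \<cdot> (si a \<cdot> a)" using central idem2 a by auto
  have "a \<cdot> b \<cdot> (si b \<cdot> si a) \<cdot> (a \<cdot> b) = a \<cdot> ((b \<cdot> si b) \<cdot> (si a \<cdot> a)) \<cdot> b"
    using a b by (simp add: assoc)
  also have "\<dots> = a \<cdot> ((si a \<cdot> a) \<cdot> (b \<cdot> si b)) \<cdot> b" using cb[of "si a \<cdot> a"] a by simp
  also have "\<dots> = (a \<cdot> si a \<cdot> a) \<cdot> (b \<cdot> si b \<cdot> b)" using a b by (simp add: assoc)
  also have "\<dots> = a \<cdot> b" using a b si by simp
  finally show "a \<cdot> b \<cdot> (si b \<cdot> si a) \<cdot> (a \<cdot> b) = a \<cdot> b" .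
  have "si b \<cdot> si a \<cdot> (a \<cdot> b) \<cdot> (si b \<cdot> si a) = si b \<cdot> ((si a \<cdot> a) \<cdot> (b \<cdot> si b)) \<cdot> si a"
    using a b by (simp add: assoc)
  also have "\<dots> = si b \<cdot> ((b \<cdot> si b) \<cdot> (si a \<cdot> a)) \<cdot> si a" using cb[of "si a \<cdot> a"] a by simp
  also have "\<dots> = (si b \<cdot> b \<cdot> si b) \<cdot> (si a \<cdot> a \<cdot> si a)" using a b by (simp add: assoc)
  also have "\<dots> = si b \<cdot> si a" using a b si by simp
  finally show "si b \<cdot> si a \<cdot> (a \<cdot> b) \<cdot> (si b \<cdot> si a) = si b \<cdot> si a" .
qed (auto)

lemma ideal_sub: "sg_ideal A I \<Longrightarrow> I \<subseteq> carrier A" unfolding sg_ideal_def by blast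
lemma ideal_multL: "sg_ideal A I \<Longrightarrow> s \<in> carrier A \<Longrightarrow> a \<in> I \<Longrightarrow> s \<cdot> a \<in> I" unfolding sg_ideal_def by blast
lemma ideal_multR: "sg_ideal A I \<Longrightarrow> s \<in> carrier A \<Longrightarrow> a \<in> I \<Longrightarrow> a \<cdot> s \<in> I" unfolding sg_ideal_def by blast
lemma ideal_si: "sg_ideal A I \<Longrightarrow> a \<in> I \<Longrightarrow> si a \<in> I"
  by (metis ideal_multL ideal_multR ideal_sub si si_closed subsetD)

lemma ideal_Int: "sg_ideal A I \<Longrightarrow> sg_ideal A J \<Longrightarrow> sg_ideal A (I \<inter> J)"
proof -
  assume I: "sg_ideal A I" and J: "sg_ideal A J"
  obtain a b where "a \<in> I" "b \<in> J" using I J unfolding sg_ideal_def by blast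
  then have "a \<cdot> b \<in> I \<inter> J" using I J ideal_multL ideal_multR ideal_sub by blast
  then show ?thesis using I J unfolding sg_ideal_def by blast
qed

lemma set_mult_ideal: "sg_ideal A I \<Longrightarrow> sg_ideal A J \<Longrightarrow> I <#>\<^bsub>A\<^esub> J = I \<inter> J"
proof -
  assume I: "sg_ideal A I" and J: "sg_ideal A J"
  show ?thesis
  proof
    show "I <#>\<^bsub>A\<^esub> J \<subseteq> I \<inter> J" unfolding set_mult_def
      using I J ideal_multL ideal_multR ideal_sub by blast
    show "I \<inter> J \<subseteq> I <#>\<^bsub>A\<^esub> J"
    proof
      fix s assume s: "s \<in> I \<inter> J"
      then have sA: "s \<in> carrier A" using I ideal_sub by blast
      have "s \<cdot> si s \<in> I" using s I ideal_multR sA by blast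
      moreover have "s = s \<cdot> si s \<cdot> s" using sA si by simp
      ultimately show "s \<in> I <#>\<^bsub>A\<^esub> J" unfolding set_mult_def using s by blast
    qed
  qed
qed

context
  fixes T and w
  assumes T: "sg_ideal A T" and um: "unit_multiplier A T w"
begin

lemma TA: "t \<in> T \<Longrightarrow> t \<in> carrier A" using ideal_sub T by blast

lemma Rin: "t \<in> T \<Longrightarrow> snd w t \<in> T" using um unfolding unit_multiplier_def multiplier_def by blast
lemma Lin: "t \<in> T \<Longrightarrow> fst w t \<in> T" using um unfolding unit_multiplier_def multiplier_def by blast
lemma R_mult: "s \<in> T \<Longrightarrow> t \<in> T \<Longrightarrow> snd w (s \<cdot> t) = s \<cdot> snd w t"
  using um unfolding unit_multiplier_def multiplier_def by blast
lemma L_mult: "s \<in> T \<Longrightarrow> t \<in> T \<Longrightarrow> fst w (s \<cdot> t) = fst w s \<cdot> t"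
  using um unfolding unit_multiplier_def multiplier_def by blast
lemma link: "s \<in> T \<Longrightarrow> t \<in> T \<Longrightarrow> s \<cdot> fst w t = snd w s \<cdot> t"
  using um unfolding unit_multiplier_def multiplier_def by blast

lemma Rinv_ex: "\<exists>R'. (\<forall>t\<in>T. R' t \<in> T) \<and> (\<forall>s\<in>T. \<forall>t\<in>T. R' (s \<cdot> t) = s \<cdot> R' t) \<and>
   (\<forall>s\<in>T. snd w (R' s) = s \<and> R' (snd w s) = s)"
proof -
  obtain w' where "multiplier A T w'" "\<forall>s\<in>T. snd w (snd w' s) = s \<and> snd w' (snd w s) = s"
    using um unfolding unit_multiplier_def by blast
  then show ?thesis unfolding multiplier_def by (intro exI[of _ "snd w'"]) blast
qed

lemma R_inj: "inj_on (snd w) T"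
  using Rinv_ex by (metis inj_onI)

lemma R_surj: "snd w ` T = T"
  using Rinv_ex Rin by (smt (verit) image_iff subsetI subset_antisym)

lemma Rinv1: "t \<in> T \<Longrightarrow> inv_into T (snd w) (snd w t) = t"
  using R_inj by (simp add: inv_into_f_f)

lemma Rinv2: "z \<in> T \<Longrightarrow> snd w (inv_into T (snd w) z) = z"
  using R_surj by (simp add: f_inv_into_f)

lemma Rinv3: "z \<in> T \<Longrightarrow> inv_into T (snd w) z \<in> T"
  using R_surj by (metis inv_into_into)

lemma R_ext: "a \<in> carrier A \<Longrightarrow> t \<in> T \<Longrightarrow> snd w (a \<cdot> t) = a \<cdot> snd w t"
proof -
  assume a: "a \<in> carrier A" and t: "t \<in> T"
  have tA: "t \<in> carrier A" using TA t .
  have e: "t \<cdot> si t \<in> T" using ideal_multR[OF T] t tA by simp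
  have ae: "a \<cdot> (t \<cdot> si t) \<in> T" using ideal_multL[OF T] e a by simp
  have "a \<cdot> t = a \<cdot> (t \<cdot> si t) \<cdot> t" using a tA si by (simp add: assoc)
  then have "snd w (a \<cdot> t) = a \<cdot> (t \<cdot> si t) \<cdot> snd w t" using R_mult[OF ae t] by simp
  also have "\<dots> = a \<cdot> snd w (t \<cdot> si t \<cdot> t)" using R_mult[OF e t] a tA TA[OF e] TA[OF Rin[OF t]]
    by (simp add: assoc)
  also have "\<dots> = a \<cdot> snd w t" using tA si by simp
  finally show ?thesis .
qed

lemma R_idem: "t \<in> T \<Longrightarrow> snd w t \<cdot> si (snd w t) = t \<cdot> si t"
proof -
  assume t: "t \<in> T"
  obtain R' where R': "\<forall>t\<in>T. R' t \<in> T" "\<forall>s\<in>T. \<forall>t\<in>T. R' (s \<cdot> t) = s \<cdot> R' t"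
    "\<forall>s\<in>T. snd w (R' s) = s \<and> R' (snd w s) = s" using Rinv_ex by blast
  define r where "r = snd w t"
  have r: "r \<in> T" using Rin t r_def by simp
  have tA: "t \<in> carrier A" and rA: "r \<in> carrier A" using TA t r by auto
  define e where "e = t \<cdot> si t"
  define f where "f = r \<cdot> si r"
  have eT: "e \<in> T" unfolding e_def using ideal_multR[OF T] t tA by simp
  have fT: "f \<in> T" unfolding f_def using ideal_multR[OF T] r rA by simp
  have eA: "e \<in> carrier A" and fA: "f \<in> carrier A" using eT fT TA by auto
  have "e \<cdot> t = t" unfolding e_def using tA si by simp
  then have "r = e \<cdot> r" unfolding r_def using R_mult[OF eT t] by simp
  then have ef: "e \<cdot> f = f" unfolding f_def using eA rA by (metis assoc si_closed)
  have "f \<cdot> r = r" unfolding f_def using rA si by simp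
  then have "t = f \<cdot> t" using R' r fT unfolding r_def by (metis t)
  then have fe: "f \<cdot> e = e" unfolding e_def using fA tA by (metis assoc si_closed)
  have "e \<cdot> f = f \<cdot> e" using central[OF eA _ fA] idem1[OF tA] e_def by simp
  then show ?thesis using ef fe unfolding e_def f_def r_def by simp
qed

lemma LR_idem: "e \<in> T \<Longrightarrow> e \<cdot> e = e \<Longrightarrow> fst w e = snd w e"
proof -
  assume e: "e \<in> T" and ee: "e \<cdot> e = e"
  have eA: "e \<in> carrier A" using TA e .
  have L: "fst w e = fst w e \<cdot> e" using L_mult[OF e e] ee by simp
  have R: "snd w e = e \<cdot> snd w e" using R_mult[OF e e] ee by simp
  have "fst w e \<cdot> e = e \<cdot> fst w e" using central[OF eA ee] TA[OF Lin[OF e]] by simp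
  also have "\<dots> = snd w e \<cdot> e" using link[OF e e] .
  also have "\<dots> = e \<cdot> snd w e" using central[OF eA ee] TA[OF Rin[OF e]] by simp
  finally show ?thesis using L R by simp
qed

end

end

locale tpa = cliff +
  fixes G :: "('g,'c) monoid_scheme" and D :: "'g \<Rightarrow> 'a set" and \<theta> :: "'g \<Rightarrow> 'a \<Rightarrow> 'a"
    and w :: "'g \<Rightarrow> 'g \<Rightarrow> ('a \<Rightarrow> 'a) \<times> ('a \<Rightarrow> 'a)"
  assumes grp: "group G" and tp: "twisted_partial_action G A D \<theta> w"

sublocale tpa \<subseteq> G: group G by (rule grp)

context tpa
begin

abbreviation gm (infixl "\<diamondsuit>" 70) where "x \<diamondsuit> y \<equiv> x \<otimes>\<^bsub>G\<^esub> y"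
abbreviation gi where "gi x \<equiv> inv\<^bsub>G\<^esub> x"
abbreviation th' where "th' x \<equiv> inv_into (D (gi x)) (\<theta> x)"
abbreviation R where "R x y \<equiv> snd (w x y)"
abbreviation L where "L x y \<equiv> fst (w x y)"

lemma Dideal: "x \<in> carrier G \<Longrightarrow> sg_ideal A (D x)"
  using tp unfolding twisted_partial_action_def by (elim conjE) blast
lemma DA: "x \<in> carrier G \<Longrightarrow> a \<in> D x \<Longrightarrow> a \<in> carrier A"
  using Dideal ideal_sub by blast
lemma DmL: "x \<in> carrier G \<Longrightarrow> a \<in> D x \<Longrightarrow> s \<in> carrier A \<Longrightarrow> s \<cdot> a \<in> D x"
  using Dideal ideal_multL by blast
lemma DmR: "x \<in> carrier G \<Longrightarrow> a \<in> D x \<Longrightarrow> s \<in> carrier A \<Longrightarrow> a \<cdot> s \<in> D x"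
  using Dideal ideal_multR by blast
lemma Dsi: "x \<in> carrier G \<Longrightarrow> a \<in> D x \<Longrightarrow> si a \<in> D x"
  using Dideal ideal_si by blast
lemma Dne: "x \<in> carrier G \<Longrightarrow> \<exists>a. a \<in> D x"
  using Dideal unfolding sg_ideal_def by blast

lemma th_bij: "x \<in> carrier G \<Longrightarrow> bij_betw (\<theta> x) (D (gi x)) (D x)"
  using tp unfolding twisted_partial_action_def by (elim conjE) blast
lemma th_mult: "x \<in> carrier G \<Longrightarrow> a \<in> D (gi x) \<Longrightarrow> b \<in> D (gi x) \<Longrightarrow> \<theta> x (a \<cdot> b) = \<theta> x a \<cdot> \<theta> x b"
  using tp unfolding twisted_partial_action_def by (elim conjE) blast
lemma D1: "D \<one>\<^bsub>G\<^esub> = carrier A"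
  using tp unfolding twisted_partial_action_def by (elim conjE) blast
lemma th1: "a \<in> carrier A \<Longrightarrow> \<theta> \<one>\<^bsub>G\<^esub> a = a"
  using tp unfolding twisted_partial_action_def by (elim conjE) blast

lemma Dint: "x \<in> carrier G \<Longrightarrow> y \<in> carrier G \<Longrightarrow> D x <#>\<^bsub>A\<^esub> D y = D x \<inter> D y"
  using set_mult_ideal Dideal by blast

lemma wum: "x \<in> carrier G \<Longrightarrow> y \<in> carrier G \<Longrightarrow> unit_multiplier A (D x \<inter> D (x \<diamondsuit> y)) (w x y)"
proof -
  assume xy: "x \<in> carrier G" "y \<in> carrier G"
  have "unit_multiplier A (D x <#>\<^bsub>A\<^esub> D (x \<diamondsuit> y)) (w x y)"
    using tp xy unfolding twisted_partial_action_def by (elim conjE) blast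
  then show ?thesis using Dint xy by simp
qed
lemma Tideal: "x \<in> carrier G \<Longrightarrow> y \<in> carrier G \<Longrightarrow> sg_ideal A (D x \<inter> D y)"
  using Dideal ideal_Int by blast

lemma iii: "x \<in> carrier G \<Longrightarrow> y \<in> carrier G \<Longrightarrow> \<theta> x ` (D (gi x) \<inter> D y) = D x \<inter> D (x \<diamondsuit> y)"
proof -
  assume xy: "x \<in> carrier G" "y \<in> carrier G"
  have "\<theta> x ` (D (gi x) <#>\<^bsub>A\<^esub> D y) = D x <#>\<^bsub>A\<^esub> D (x \<diamondsuit> y)"
    using tp xy unfolding twisted_partial_action_def by (elim conjE) blast
  then show ?thesis using Dint xy by simp
qed

lemma iv: "x \<in> carrier G \<Longrightarrow> y \<in> carrier G \<Longrightarrow> s \<in> D (gi y) \<inter> D (gi y \<diamondsuit> gi x) \<Longrightarrow>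
   \<theta> x (\<theta> y s) = inv_into (D x \<inter> D (x \<diamondsuit> y)) (R x y) (L x y (\<theta> (x \<diamondsuit> y) s))"
proof -
  assume xy: "x \<in> carrier G" "y \<in> carrier G" and s: "s \<in> D (gi y) \<inter> D (gi y \<diamondsuit> gi x)"
  have s': "s \<in> D (gi y) <#>\<^bsub>A\<^esub> D (gi y \<diamondsuit> gi x)" using s Dint xy by simp
  have "\<theta> x (\<theta> y s) = mult_rinv (D x <#>\<^bsub>A\<^esub> D (x \<diamondsuit> y)) (w x y) (L x y (\<theta> (x \<diamondsuit> y) s))"
    using tp xy s' unfolding twisted_partial_action_def by (elim conjE) blast
  then show ?thesis using Dint xy unfolding mult_rinv_def by simp
qed

lemma v: "x \<in> carrier G \<Longrightarrow> s \<in> D x \<Longrightarrow> R \<one>\<^bsub>G\<^esub> x s = s \<and> R x \<one>\<^bsub>G\<^esub> s = s"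
  using tp unfolding twisted_partial_action_def by (elim conjE) auto

lemma vi: "x \<in> carrier G \<Longrightarrow> y \<in> carrier G \<Longrightarrow> z \<in> carrier G \<Longrightarrow> s \<in> D (gi x) \<inter> D y \<inter> D (y \<diamondsuit> z) \<Longrightarrow>
   R x (y \<diamondsuit> z) (\<theta> x (R y z s)) = R (x \<diamondsuit> y) z (R x y (\<theta> x s))"
proof -
  assume xyz: "x \<in> carrier G" "y \<in> carrier G" "z \<in> carrier G" and s: "s \<in> D (gi x) \<inter> D y \<inter> D (y \<diamondsuit> z)"
  have "D (gi x) <#>\<^bsub>A\<^esub> D y <#>\<^bsub>A\<^esub> D (y \<diamondsuit> z) = D (gi x) \<inter> D y \<inter> D (y \<diamondsuit> z)"
    using xyz Dint set_mult_ideal[OF Tideal[of "gi x" y] Dideal[of "y \<diamondsuit> z"]] by auto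
  then have s': "s \<in> D (gi x) <#>\<^bsub>A\<^esub> D y <#>\<^bsub>A\<^esub> D (y \<diamondsuit> z)" using s by simp
  have H: "\<forall>x\<in>carrier G. \<forall>y\<in>carrier G. \<forall>z\<in>carrier G.
        \<forall>s\<in>D (inv\<^bsub>G\<^esub> x) <#>\<^bsub>A\<^esub> D y <#>\<^bsub>A\<^esub> D (y \<otimes>\<^bsub>G\<^esub> z).
          snd (w x (y \<otimes>\<^bsub>G\<^esub> z)) (\<theta> x (snd (w y z) s)) =
          snd (w (x \<otimes>\<^bsub>G\<^esub> y) z) (snd (w x y) (\<theta> x s))"
    using tp unfolding twisted_partial_action_def by (elim conjE) assumption
  show ?thesis using H xyz s' by blast
qed

lemma thD: "x \<in> carrier G \<Longrightarrow> s \<in> D (gi x) \<Longrightarrow> \<theta> x s \<in> D x"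
  using th_bij bij_betwE by blast
lemma th'D: "x \<in> carrier G \<Longrightarrow> a \<in> D x \<Longrightarrow> th' x a \<in> D (gi x)"
  using th_bij by (metis bij_betw_def inv_into_into)
lemma th_th': "x \<in> carrier G \<Longrightarrow> a \<in> D x \<Longrightarrow> \<theta> x (th' x a) = a"
  using th_bij by (metis bij_betw_def f_inv_into_f)
lemma th'_th: "x \<in> carrier G \<Longrightarrow> s \<in> D (gi x) \<Longrightarrow> th' x (\<theta> x s) = s"
  using th_bij by (metis bij_betw_def inv_into_f_f)

lemma th_si: "x \<in> carrier G \<Longrightarrow> s \<in> D (gi x) \<Longrightarrow> \<theta> x (si s) = si (\<theta> x s)"
proof -
  assume x: "x \<in> carrier G" and s: "s \<in> D (gi x)"
  have gx: "gi x \<in> carrier G" using x by simp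
  have sA: "s \<in> carrier A" using DA gx s by blast
  have s': "si s \<in> D (gi x)" using Dsi gx s by blast
  have ss: "s \<cdot> si s \<in> D (gi x)" using DmR[OF gx s] sA by simp
  have "\<theta> x s \<cdot> \<theta> x (si s) \<cdot> \<theta> x s = \<theta> x s"
    using th_mult[OF x s s'] th_mult[OF x ss s] x si[OF sA] by simp
  moreover have "\<theta> x (si s) \<cdot> \<theta> x s \<cdot> \<theta> x (si s) = \<theta> x (si s)"
    using th_mult[OF x s' s] th_mult[OF x _ s', of "si s \<cdot> s"] DmR[OF gx s' sA] x si[OF sA] by simp
  ultimately show ?thesis using si_unique thD x s s' DA by (metis)
qed

lemma th_idem: "x \<in> carrier G \<Longrightarrow> s \<in> D (gi x) \<Longrightarrow> s \<cdot> s = s \<Longrightarrow> \<theta> x s \<cdot> \<theta> x s = \<theta> x s"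
  using th_mult by metis

lemma TH1: "x \<in> carrier G \<Longrightarrow> s \<in> D (gi x) \<Longrightarrow> t \<in> carrier A \<Longrightarrow>
   \<theta> x (s \<cdot> t) = \<theta> x s \<cdot> \<theta> x (si s \<cdot> s \<cdot> t)"
proof -
  assume x: "x \<in> carrier G" and s: "s \<in> D (gi x)" and t: "t \<in> carrier A"
  have gx: "gi x \<in> carrier G" using x by simp
  have sA: "s \<in> carrier A" using DA gx s by blast
  have "s \<cdot> t = s \<cdot> (si s \<cdot> s \<cdot> t)" using sA t si[OF sA] by (metis assoc closed si_closed)
  moreover have "si s \<cdot> s \<cdot> t \<in> D (gi x)" using DmR[OF gx] Dsi[OF gx s] sA t by (simp add: DmR gx s)
  ultimately show ?thesis using th_mult[OF x s] by simp
qed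


lemma prod_in: "x \<in> carrier G \<Longrightarrow> y \<in> carrier G \<Longrightarrow> a \<in> D x \<Longrightarrow> b \<in> D y \<Longrightarrow>
   th' x a \<cdot> b \<in> D (gi x) \<inter> D y \<and> \<theta> x (th' x a \<cdot> b) \<in> D x \<inter> D (x \<diamondsuit> y) \<and>
   R x y (\<theta> x (th' x a \<cdot> b)) \<in> D x \<inter> D (x \<diamondsuit> y)"
proof -
  assume xy: "x \<in> carrier G" "y \<in> carrier G" and a: "a \<in> D x" and b: "b \<in> D y"
  have 1: "th' x a \<cdot> b \<in> D (gi x) \<inter> D y"
    using b DmR[of "gi x" "th' x a" b] DmL[of y b "th' x a"] th'D[OF xy(1) a] DA[OF xy(2) b] DA[of "gi x"] xy by auto
  then have 2: "\<theta> x (th' x a \<cdot> b) \<in> D x \<inter> D (x \<diamondsuit> y)" using iii xy by blast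
  then show ?thesis using 1 Rin[OF Tideal wum] xy by auto
qed

lemma gfacts: "x \<in> carrier G \<Longrightarrow> y \<in> carrier G \<Longrightarrow>
  gi (x \<diamondsuit> y) = gi y \<diamondsuit> gi x \<and> x \<diamondsuit> y \<diamondsuit> gi y = x \<and> y \<diamondsuit> (gi y \<diamondsuit> gi x) = gi x"
  by (simp add: G.inv_mult_group G.m_assoc flip: G.m_assoc[of y "gi y"])

lemma assoc_main:
  assumes x: "x \<in> carrier G" and y: "y \<in> carrier G" and z: "z \<in> carrier G"
    and a: "a \<in> D x" and b: "b \<in> D y" and c: "c \<in> D z"
  shows "R (x \<diamondsuit> y) z (\<theta> (x \<diamondsuit> y) (th' (x \<diamondsuit> y) (R x y (\<theta> x (th' x a \<cdot> b))) \<cdot> c))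
       = R x (y \<diamondsuit> z) (\<theta> x (th' x a \<cdot> R y z (\<theta> y (th' y b \<cdot> c))))"
proof -
  define xy where "xy = x \<diamondsuit> y"
  have xyG: "xy \<in> carrier G" using x y xy_def by simp
  have gx: "gi x \<in> carrier G" and gy: "gi y \<in> carrier G" and gxy: "gi xy \<in> carrier G" using x y xyG by auto
  have g1: "gi xy = gi y \<diamondsuit> gi x" and g2: "xy \<diamondsuit> gi y = x" and g3: "y \<diamondsuit> (gi y \<diamondsuit> gi x) = gi x"
    using gfacts[OF x y] xy_def by auto
  define Txy where "Txy = D x \<inter> D xy"
  have Tid: "sg_ideal A Txy" unfolding Txy_def using Tideal x xyG by blast
  have um: "unit_multiplier A Txy (w x y)" unfolding Txy_def xy_def using wum x y by blast
  have cA: "c \<in> carrier A" using DA z c by blast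
  define a' where "a' = th' x a"
  define b' where "b' = th' y b"
  have a': "a' \<in> D (gi x)" unfolding a'_def using th'D x a by blast
  have b': "b' \<in> D (gi y)" unfolding b'_def using th'D y b by blast
  have a'A: "a' \<in> carrier A" using DA gx a' by blast
  have b'A: "b' \<in> carrier A" using DA gy b' by blast
  have bA: "b \<in> carrier A" using DA y b by blast
  have bb': "\<theta> y b' = b" unfolding b'_def using th_th' y b by blast
  define u where "u = \<theta> y (b' \<cdot> c)"
  have u: "u \<in> D y \<inter> D (y \<diamondsuit> z)" unfolding u_def b'_def using prod_in[OF y z b c] by blast
  have uA: "u \<in> carrier A" using DA y u by blast
  define s where "s = a' \<cdot> u"
  have s: "s \<in> D (gi x) \<inter> D y \<inter> D (y \<diamondsuit> z)" unfolding s_def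
    using DmR[OF gx a' uA] DmL[OF y _ a'A] DmL[OF _ _ a'A, of "y \<diamondsuit> z" u] u y z by auto
  have "a' \<cdot> R y z u = R y z s" unfolding s_def
    using R_ext[OF Tideal[of y "y \<diamondsuit> z"] wum[OF y z] a'A u] y z by simp
  then have RHS: "R x (y \<diamondsuit> z) (\<theta> x (th' x a \<cdot> R y z (\<theta> y (th' y b \<cdot> c)))) = R xy z (R x y (\<theta> x s))"
    using vi[OF x y z s] unfolding a'_def b'_def u_def xy_def by simp
  define t0 where "t0 = \<theta> x (a' \<cdot> b)"
  have t0: "t0 \<in> Txy" and a'b: "a' \<cdot> b \<in> D (gi x) \<inter> D y" 
    using prod_in[OF x y a b] unfolding t0_def a'_def Txy_def xy_def by auto
  have t0A: "t0 \<in> carrier A" using t0 Tid ideal_sub by blast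
  have a'bA: "a' \<cdot> b \<in> carrier A" using a'A bA by simp
  define p where "p = R x y t0"
  have p: "p \<in> Txy" unfolding p_def using Rin[OF Tid um t0] .
  have pA: "p \<in> carrier A" using p Tid ideal_sub by blast
  have pim: "p \<in> \<theta> xy ` (D (gi xy) \<inter> D (gi y))" using iii[OF xyG gy] g2 p unfolding Txy_def by blast
  define q where "q = th' xy p"
  have q: "q \<in> D (gi xy) \<inter> D (gi y)" using pim th'_th[OF xyG] unfolding q_def by auto
  have qA: "q \<in> carrier A" using DA gy q by blast
  have pq: "\<theta> xy q = p" unfolding q_def using th_th' xyG p unfolding Txy_def by blast
  define g where "g = si q \<cdot> q"
  have g: "g \<in> D (gi xy) \<inter> D (gi y)" unfolding g_def
    using DmR[OF _ Dsi qA] q gxy gy by auto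
  have gA: "g \<in> carrier A" using g_def qA by simp
  have gg: "g \<cdot> g = g" unfolding g_def using idem2 qA by simp
  define e where "e = p \<cdot> si p"
  have ge: "\<theta> xy g = e" unfolding g_def e_def
    using th_mult[OF xyG Dsi[OF gxy] ] q th_si[OF xyG] pq comm[OF pA] by auto
  define h where "h = g \<cdot> c"
  have h: "h \<in> D (gi xy) \<inter> D (gi y)" unfolding h_def using DmR[OF _ _ cA] g gxy gy by auto
  have hA: "h \<in> carrier A" using h_def gA cA by simp
  have qc: "\<theta> xy (q \<cdot> c) = p \<cdot> \<theta> xy h"
    using TH1[OF xyG _ cA, of q] q pq unfolding h_def g_def by auto
  have h': "h \<in> D (gi y) \<inter> D (gi y \<diamondsuit> gi x)" using h g1 by simp
  have g': "g \<in> D (gi y) \<inter> D (gi y \<diamondsuit> gi x)" using g g1 by simp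
  have thT: "\<And>k. k \<in> D (gi xy) \<inter> D (gi y) \<Longrightarrow> \<theta> xy k \<in> Txy"
    using iii[OF xyG gy] g2 unfolding Txy_def by blast
  have thyD: "\<And>k. k \<in> D (gi y) \<inter> D (gi y \<diamondsuit> gi x) \<Longrightarrow> \<theta> y k \<in> D y \<inter> D (gi x)"
    using iii[OF y _] g3 gx gy by (metis G.m_closed image_eqI)
  have ivh: "R x y (\<theta> x (\<theta> y h)) = L x y (\<theta> xy h)"
    using iv[OF x y h'] Rinv2[OF Tid um] Lin[OF Tid um] thT[OF h] unfolding xy_def Txy_def by simp
  have hy: "\<theta> y h \<in> D y \<inter> D (gi x)" using thyD h' by blast
  have hyA: "\<theta> y h \<in> carrier A" using hy DA y by blast
  have thxhy: "\<theta> x (\<theta> y h) \<in> carrier A" using thD[OF x] hy DA x by blast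
  have "p \<cdot> \<theta> xy h = t0 \<cdot> L x y (\<theta> xy h)" unfolding p_def using link[OF Tid um t0 thT[OF h]] by simp
  also have "\<dots> = t0 \<cdot> R x y (\<theta> x (\<theta> y h))" using ivh by simp
  also have "\<dots> = R x y (t0 \<cdot> \<theta> x (\<theta> y h))"
    using R_ext[OF Tid um t0A, of "\<theta> x (\<theta> y h)"] ivh Rinv3[OF Tid um] iv[OF x y h'] Lin[OF Tid um] thT[OF h]
    unfolding xy_def Txy_def by simp
  also have "t0 \<cdot> \<theta> x (\<theta> y h) = \<theta> x (a' \<cdot> b \<cdot> \<theta> y h)"
    unfolding t0_def using th_mult[OF x] a'b hy by simp
  finally have LHS1: "\<theta> xy (q \<cdot> c) = R x y (\<theta> x (a' \<cdot> b \<cdot> \<theta> y h))" using qc by simp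
  have "b \<cdot> \<theta> y h = \<theta> y (b' \<cdot> h)" using th_mult[OF y b'] h bb' by simp
  also have "b' \<cdot> h = g \<cdot> (b' \<cdot> c)"
  proof -
    have "b' \<cdot> h = b' \<cdot> g \<cdot> c" unfolding h_def using assoc[OF b'A gA cA] by simp
    also have "\<dots> = g \<cdot> b' \<cdot> c" using central[OF gA gg b'A] by simp
    finally show ?thesis using assoc[OF gA b'A cA] by simp
  qed
  also have "\<theta> y (g \<cdot> (b' \<cdot> c)) = \<theta> y g \<cdot> u" unfolding u_def
    using th_mult[OF y] g DmR[OF gy b' cA] by simp
  finally have bh: "b \<cdot> \<theta> y h = \<theta> y g \<cdot> u" .
  have gy': "\<theta> y g \<in> D y \<inter> D (gi x)" using thyD g' by blast
  have eT: "e \<in> Txy" unfolding e_def using ideal_multR[OF Tid _ p] pA by simp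
  have ee: "e \<cdot> e = e" unfolding e_def using idem1 pA by simp
  have "\<theta> x (\<theta> y g) = e" using iv[OF x y g'] ge LR_idem[OF Tid um eT ee] Rinv1[OF Tid um eT]
    unfolding xy_def Txy_def by simp
  then have gye: "\<theta> y g = th' x e" using th'_th[OF x] gy' by auto
  have "e = t0 \<cdot> si t0" unfolding e_def p_def using R_idem[OF Tid um t0] .
  also have "\<dots> = \<theta> x ((a' \<cdot> b) \<cdot> si (a' \<cdot> b))" unfolding t0_def
    using th_mult[OF x] th_si[OF x] a'b Dsi[OF gx] by auto
  finally have "th' x e = (a' \<cdot> b) \<cdot> si (a' \<cdot> b)"
    using th'_th[OF x] DmR[OF gx _ si_closed[OF a'bA]] a'b by auto
  then have gyv: "\<theta> y g = a' \<cdot> si a' \<cdot> (b \<cdot> si b)" using gye si_mult[OF a'A bA] a'A bA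
    central[OF _ idem1[OF bA]] by (simp add: assoc)
  have ub: "b \<cdot> si b \<cdot> u = u"
  proof -
    have "u = b \<cdot> \<theta> y (si b' \<cdot> b' \<cdot> c)" unfolding u_def using TH1[OF y b' cA] bb' by simp
    moreover have X: "\<theta> y (si b' \<cdot> b' \<cdot> c) \<in> carrier A"
      using DA[OF y] thD[OF y] DmR[OF gy DmL[OF gy b' si_closed[OF b'A]] cA] by blast
    ultimately show ?thesis using left_unit' bA X by metis
  qed
  have "a' \<cdot> b \<cdot> \<theta> y h = a' \<cdot> (a' \<cdot> si a' \<cdot> (b \<cdot> si b \<cdot> u))"
    using bh gyv a'A bA uA hyA by (simp add: assoc)
  also have "\<dots> = s"
  proof -
    have Y: "b \<cdot> si b \<cdot> u \<in> carrier A" using bA uA by simp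
    have "a' \<cdot> (a' \<cdot> si a' \<cdot> (b \<cdot> si b \<cdot> u)) = a' \<cdot> (a' \<cdot> si a') \<cdot> (b \<cdot> si b \<cdot> u)"
      using assoc[OF a'A _ Y, of "a' \<cdot> si a'"] a'A by simp
    then show ?thesis unfolding s_def using ub right_unit[OF a'A] by simp
  qed
  finally have "\<theta> xy (q \<cdot> c) = R x y (\<theta> x s)" using LHS1 by simp
  then show ?thesis using RHS unfolding q_def p_def t0_def a'_def xy_def by simp
qed


abbreviation U where "U \<equiv> crossed_product G A D \<theta> w"
abbreviation SS where "SS \<equiv> idem_crossed_product G A D \<theta>"

lemma U_carrier: "carrier U = {(a, x). x \<in> carrier G \<and> a \<in> D x}"
  unfolding crossed_product_def by simp
lemma U_mult: "(a, x) \<otimes>\<^bsub>U\<^esub> (b, y) = (R x y (\<theta> x (th' x a \<cdot> b)), x \<diamondsuit> y)"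
  unfolding crossed_product_def by simp
lemma S_carrier: "carrier SS = {(e, x). x \<in> carrier G \<and> e \<in> D x \<inter> idems A}"
  unfolding idem_crossed_product_def by simp
lemma S_mult: "(e, x) \<otimes>\<^bsub>SS\<^esub> (f, y) = (\<theta> x (th' x e \<cdot> f), x \<diamondsuit> y)"
  unfolding idem_crossed_product_def by simp

lemma th'1: "a \<in> carrier A \<Longrightarrow> th' \<one>\<^bsub>G\<^esub> a = a"
  using th'_th[of "\<one>\<^bsub>G\<^esub>" a] th1 D1 by simp

lemma mult1L: "y \<in> carrier G \<Longrightarrow> a \<in> carrier A \<Longrightarrow> b \<in> D y \<Longrightarrow> (a, \<one>\<^bsub>G\<^esub>) \<otimes>\<^bsub>U\<^esub> (b, y) = (a \<cdot> b, y)"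
proof -
  assume y: "y \<in> carrier G" and a: "a \<in> carrier A" and b: "b \<in> D y"
  have ab: "a \<cdot> b \<in> D y" using DmL y b a by blast
  have "a \<cdot> b \<in> carrier A" using DA y ab by blast
  then show ?thesis using U_mult th'1 th1 v y ab a by simp
qed

lemma Ucl: "u \<in> carrier U \<Longrightarrow> v \<in> carrier U \<Longrightarrow> u \<otimes>\<^bsub>U\<^esub> v \<in> carrier U"
  using prod_in by (auto simp: U_carrier U_mult)

lemma Uassoc: "u \<in> carrier U \<Longrightarrow> v \<in> carrier U \<Longrightarrow> t \<in> carrier U \<Longrightarrow>
   u \<otimes>\<^bsub>U\<^esub> v \<otimes>\<^bsub>U\<^esub> t = u \<otimes>\<^bsub>U\<^esub> (v \<otimes>\<^bsub>U\<^esub> t)"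
  using assoc_main by (auto simp: U_carrier U_mult G.m_assoc)

lemma U_sgrp: "sgrp U" unfolding sgrp_def using Ucl Uassoc by blast

lemma idemsU: "u \<in> idems U \<longleftrightarrow> (\<exists>e. u = (e, \<one>\<^bsub>G\<^esub>) \<and> e \<in> idems A)"
proof
  assume u: "u \<in> idems U"
  obtain e x where ex: "u = (e, x)" "x \<in> carrier G" "e \<in> D x" using u unfolding idems_def U_carrier by auto
  have "x \<diamondsuit> x = x" using u ex unfolding idems_def by (simp add: U_mult)
  then have x: "x = \<one>\<^bsub>G\<^esub>" using ex G.l_cancel_one' by (metis G.r_cancel_one)
  have eA: "e \<in> carrier A" using ex x D1 by simp
  then have "e \<cdot> e = e" using u ex x mult1L[of "\<one>\<^bsub>G\<^esub>" e e] D1 unfolding idems_def by simp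
  then show "\<exists>e. u = (e, \<one>\<^bsub>G\<^esub>) \<and> e \<in> idems A" using ex x eA unfolding idems_def by auto
next
  assume "\<exists>e. u = (e, \<one>\<^bsub>G\<^esub>) \<and> e \<in> idems A"
  then show "u \<in> idems U" using mult1L[of "\<one>\<^bsub>G\<^esub>"] D1 unfolding idems_def U_carrier by auto
qed

lemma U_reg: "u \<in> carrier U \<Longrightarrow> \<exists>b\<in>carrier U. u \<otimes>\<^bsub>U\<^esub> b \<otimes>\<^bsub>U\<^esub> u = u"
proof -
  assume "u \<in> carrier U"
  then obtain a x where u: "u = (a, x)" and x: "x \<in> carrier G" and a: "a \<in> D x" unfolding U_carrier by auto
  have gx: "gi x \<in> carrier G" using x by simp
  have xx: "x \<diamondsuit> gi x = \<one>\<^bsub>G\<^esub>" using x by simp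
  have T: "D x \<inter> D (x \<diamondsuit> gi x) = D x" using xx D1 DA x by auto
  have Tid: "sg_ideal A (D x)" using Dideal x by simp
  have um: "unit_multiplier A (D x) (w x (gi x))" using wum[OF x gx] T by simp
  obtain R' where R': "\<forall>t\<in>D x. R' t \<in> D x" "\<forall>s\<in>D x. \<forall>t\<in>D x. R' (s \<cdot> t) = s \<cdot> R' t"
    "\<forall>s\<in>D x. R x (gi x) (R' s) = s \<and> R' (R x (gi x) s) = s" using Rinv_ex[OF Tid um] by blast
  have aA: "a \<in> carrier A" using DA x a by blast
  define e where "e = a \<cdot> si a"
  have e: "e \<in> D x" unfolding e_def using DmR x a aA by simp
  have ee: "e \<cdot> e = e" unfolding e_def using idem1 aA by simp
  define t where "t = R' e"
  have t: "t \<in> D x" using R' e t_def by simp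
  have Rt: "R x (gi x) t = e" using R' e t_def by simp
  have et: "e \<cdot> t = t" using R'(2) e ee t_def by metis
  define a' where "a' = th' x a"
  have a': "a' \<in> D (gi x)" using th'D x a a'_def by simp
  have a'A: "a' \<in> carrier A" using DA gx a' by blast
  have t': "th' x t \<in> D (gi x)" using th'D x t by simp
  have t'A: "th' x t \<in> carrier A" using DA gx t' by blast
  define b where "b = si a' \<cdot> th' x t"
  have b: "b \<in> D (gi x)" unfolding b_def using DmR[OF gx Dsi[OF gx a'] t'A] .
  have abeq: "a' \<cdot> b = a' \<cdot> si a' \<cdot> th' x t" unfolding b_def using assoc a'A t'A by simp
  then have "\<theta> x (a' \<cdot> b) = \<theta> x a' \<cdot> \<theta> x (si a') \<cdot> t"
  proof -
    have aa: "a' \<cdot> si a' \<in> D (gi x)" using DmR[OF gx a'] a'A by simp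
    show ?thesis using abeq th_mult[OF x aa t'] th_mult[OF x a' Dsi[OF gx a']] th_th'[OF x t] by simp
  qed
  also have "\<dots> = t" using th_si[OF x a'] th_th'[OF x a] a'_def et e_def by simp
  finally have ub: "u \<otimes>\<^bsub>U\<^esub> (b, gi x) = (e, \<one>\<^bsub>G\<^esub>)" using u U_mult Rt xx a'_def by simp
  have "(e, \<one>\<^bsub>G\<^esub>) \<otimes>\<^bsub>U\<^esub> u = u" using mult1L[OF x _ a] e DA x u e_def aA si by (simp add: e_def)
  moreover have "(b, gi x) \<in> carrier U" using b gx U_carrier by simp
  ultimately show ?thesis using ub by metis
qed

lemma U_inv: "inverse_semigroup U"
proof (rule inv_sgI[OF U_sgrp U_reg])
  fix e f assume "e \<in> idems U" "f \<in> idems U"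
  then obtain e0 f0 where "e = (e0, \<one>\<^bsub>G\<^esub>)" "f = (f0, \<one>\<^bsub>G\<^esub>)" "e0 \<in> idems A" "f0 \<in> idems A"
    using idemsU by blast
  then show "e \<otimes>\<^bsub>U\<^esub> f = f \<otimes>\<^bsub>U\<^esub> e" using mult1L[of "\<one>\<^bsub>G\<^esub>"] D1 central unfolding idems_def by auto
qed


definition pi where "pi = (\<lambda>(a, x::'g). (a \<cdot> si a, x))"

lemma idemsA: "a \<in> carrier A \<Longrightarrow> a \<cdot> si a \<in> idems A"
  unfolding idems_def using idem1 by simp

lemma pi_in: "u \<in> carrier U \<Longrightarrow> pi u \<in> carrier SS"
  unfolding pi_def using DmR DA idemsA by (auto simp: U_carrier S_carrier)

lemma pi_mult: "u \<in> carrier U \<Longrightarrow> v \<in> carrier U \<Longrightarrow> pi (u \<otimes>\<^bsub>U\<^esub> v) = pi u \<otimes>\<^bsub>SS\<^esub> pi v"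
proof -
  assume "u \<in> carrier U" "v \<in> carrier U"
  then obtain a x b y where u: "u = (a, x)" and v: "v = (b, y)" and x: "x \<in> carrier G" and y: "y \<in> carrier G"
    and a: "a \<in> D x" and b: "b \<in> D y" unfolding U_carrier by auto
  have gx: "gi x \<in> carrier G" using x by simp
  define a' where "a' = th' x a"
  have a': "a' \<in> D (gi x)" using th'D x a a'_def by simp
  have a'A: "a' \<in> carrier A" using DA gx a' by blast
  have aA: "a \<in> carrier A" using DA x a by blast
  have bA: "b \<in> carrier A" using DA y b by blast
  define t0 where "t0 = \<theta> x (a' \<cdot> b)"
  have Tid: "sg_ideal A (D x \<inter> D (x \<diamondsuit> y))" using Tideal x y by simp
  have t0: "t0 \<in> D x \<inter> D (x \<diamondsuit> y)" and a'b: "a' \<cdot> b \<in> D (gi x) \<inter> D y"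
    using prod_in[OF x y a b] unfolding t0_def a'_def by auto
  have a'bA: "a' \<cdot> b \<in> carrier A" using a'A bA by simp
  have "R x y t0 \<cdot> si (R x y t0) = t0 \<cdot> si t0" using R_idem[OF Tid wum[OF x y] t0] .
  also have "\<dots> = \<theta> x ((a' \<cdot> b) \<cdot> si (a' \<cdot> b))" unfolding t0_def
    using th_mult[OF x] th_si[OF x] a'b Dsi[OF gx] by auto
  also have "(a' \<cdot> b) \<cdot> si (a' \<cdot> b) = a' \<cdot> si a' \<cdot> (b \<cdot> si b)"
    using si_mult[OF a'A bA] a'A bA central[OF _ idem1[OF bA]] by (simp add: assoc)
  finally have L: "R x y t0 \<cdot> si (R x y t0) = \<theta> x (a' \<cdot> si a' \<cdot> (b \<cdot> si b))" .
  have "\<theta> x (a' \<cdot> si a') = a \<cdot> si a" using th_mult[OF x a' Dsi[OF gx a']] th_si[OF x a'] th_th'[OF x a] a'_def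
    by simp
  then have "th' x (a \<cdot> si a) = a' \<cdot> si a'" using th'_th[OF x] DmR[OF gx a'] a'A by (metis si_closed)
  then show ?thesis using L u v unfolding pi_def t0_def a'_def by (simp add: U_mult S_mult)
qed

lemma S_sub: "s \<in> carrier SS \<Longrightarrow> s \<in> carrier U \<and> pi s = s"
  unfolding pi_def by (auto simp: U_carrier S_carrier idems_def si_idem)

lemma S_mult_pi: "s \<in> carrier SS \<Longrightarrow> t \<in> carrier SS \<Longrightarrow> s \<otimes>\<^bsub>SS\<^esub> t = pi (s \<otimes>\<^bsub>U\<^esub> t)"
  using S_sub pi_mult by metis

lemma S_cl: "s \<in> carrier SS \<Longrightarrow> t \<in> carrier SS \<Longrightarrow> s \<otimes>\<^bsub>SS\<^esub> t \<in> carrier SS"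
  using S_mult_pi S_sub Ucl pi_in by metis

lemma S_sgrp: "sgrp SS"
  unfolding sgrp_def
proof (intro conjI ballI)
  fix s t assume "s \<in> carrier SS" "t \<in> carrier SS"
  then show "s \<otimes>\<^bsub>SS\<^esub> t \<in> carrier SS" using S_cl by blast
next
  fix s t r assume s: "s \<in> carrier SS" and t: "t \<in> carrier SS" and r: "r \<in> carrier SS"
  have sU: "s \<in> carrier U" and tU: "t \<in> carrier U" and rU: "r \<in> carrier U" using S_sub s t r by auto
  have "s \<otimes>\<^bsub>SS\<^esub> t \<otimes>\<^bsub>SS\<^esub> r = pi (s \<otimes>\<^bsub>U\<^esub> t) \<otimes>\<^bsub>SS\<^esub> pi r"
    using S_mult_pi s t S_sub r by metis
  also have "\<dots> = pi (s \<otimes>\<^bsub>U\<^esub> t \<otimes>\<^bsub>U\<^esub> r)" using pi_mult Ucl sU tU rU by metis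
  also have "\<dots> = pi (s \<otimes>\<^bsub>U\<^esub> (t \<otimes>\<^bsub>U\<^esub> r))" using Uassoc sU tU rU by simp
  also have "\<dots> = pi s \<otimes>\<^bsub>SS\<^esub> pi (t \<otimes>\<^bsub>U\<^esub> r)" using pi_mult Ucl sU tU rU by metis
  also have "\<dots> = s \<otimes>\<^bsub>SS\<^esub> (t \<otimes>\<^bsub>SS\<^esub> r)" using S_mult_pi s t S_sub r by metis
  finally show "s \<otimes>\<^bsub>SS\<^esub> t \<otimes>\<^bsub>SS\<^esub> r = s \<otimes>\<^bsub>SS\<^esub> (t \<otimes>\<^bsub>SS\<^esub> r)" .
qed

lemma idemsS: "s \<in> idems SS \<Longrightarrow> \<exists>e. s = (e, \<one>\<^bsub>G\<^esub>) \<and> e \<in> idems A"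
proof -
  assume u: "s \<in> idems SS"
  obtain e x where ex: "s = (e, x)" "x \<in> carrier G" "e \<in> D x \<inter> idems A" using u unfolding idems_def S_carrier by auto
  have "x \<diamondsuit> x = x" using u ex unfolding idems_def by (simp add: S_mult)
  then have x: "x = \<one>\<^bsub>G\<^esub>" using ex by (metis G.r_cancel_one)
  then show ?thesis using ex by auto
qed

lemma S_inv: "inverse_semigroup SS"
proof (rule inv_sgI[OF S_sgrp])
  fix s assume s: "s \<in> carrier SS"
  have sU: "s \<in> carrier U" using S_sub s by auto
  obtain b where b: "b \<in> carrier U" "s \<otimes>\<^bsub>U\<^esub> b \<otimes>\<^bsub>U\<^esub> s = s" using U_reg sU by blast
  have "pi s \<otimes>\<^bsub>SS\<^esub> pi b \<otimes>\<^bsub>SS\<^esub> pi s = pi (s \<otimes>\<^bsub>U\<^esub> b \<otimes>\<^bsub>U\<^esub> s)"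
    using pi_mult sU b Ucl by metis
  then show "\<exists>b\<in>carrier SS. s \<otimes>\<^bsub>SS\<^esub> b \<otimes>\<^bsub>SS\<^esub> s = s" using b S_sub s pi_in by metis
next
  fix e f assume "e \<in> idems SS" "f \<in> idems SS"
  then obtain e0 f0 where ef: "e = (e0, \<one>\<^bsub>G\<^esub>)" "f = (f0, \<one>\<^bsub>G\<^esub>)" "e0 \<in> idems A" "f0 \<in> idems A"
    using idemsS by blast
  then have "e0 \<in> carrier A" "f0 \<in> carrier A" unfolding idems_def by auto
  then show "e \<otimes>\<^bsub>SS\<^esub> f = f \<otimes>\<^bsub>SS\<^esub> e" using ef S_mult th'1 th1 central unfolding idems_def by auto
qed


lemma main:
  "group_extension A U G (\<lambda>a. (a, \<one>\<^bsub>G\<^esub>)) (\<lambda>(a::'a, x::'g). x)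
    \<and> epimorphism U SS pi
    \<and> epimorphism SS G (\<lambda>(e::'a, x::'g). x)
    \<and> semigroup_extension A U SS (\<lambda>a. (a, \<one>\<^bsub>G\<^esub>)) pi
    \<and> (\<forall>u\<in>carrier U. (\<lambda>(a::'a, x::'g). x) u = (\<lambda>(e::'a, x::'g). x) (pi u))"
proof -
  have mono: "monomorphism A U (\<lambda>a. (a, \<one>\<^bsub>G\<^esub>))"
    unfolding monomorphism_def hom_def using mult1L[of "\<one>\<^bsub>G\<^esub>"] D1 by (auto simp: U_carrier inj_on_def)
  have epij: "epimorphism U G (\<lambda>(a::'a, x::'g). x)"
    unfolding epimorphism_def hom_def
  proof (intro conjI CollectI)
    show "(\<lambda>(a::'a, x::'g). x) \<in> carrier U \<rightarrow> carrier G" by (auto simp: U_carrier)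
    show "\<forall>u\<in>carrier U. \<forall>v\<in>carrier U. (\<lambda>(a::'a, x::'g). x) (u \<otimes>\<^bsub>U\<^esub> v) =
       (\<lambda>(a::'a, x::'g). x) u \<otimes>\<^bsub>G\<^esub> (\<lambda>(a::'a, x::'g). x) v" by (auto simp: U_mult)
    show "(\<lambda>(a::'a, x::'g). x) ` carrier U = carrier G"
    proof
      show "(\<lambda>(a::'a, x::'g). x) ` carrier U \<subseteq> carrier G" by (auto simp: U_carrier)
      show "carrier G \<subseteq> (\<lambda>(a::'a, x::'g). x) ` carrier U"
      proof
        fix x assume x: "x \<in> carrier G"
        then obtain a where "a \<in> D x" using Dne by blast
        then show "x \<in> (\<lambda>(a::'a, x::'g). x) ` carrier U" using x by (force simp: U_carrier)
      qed
    qed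
  qed
  have ij: "(\<lambda>a. (a, \<one>\<^bsub>G\<^esub>)) ` carrier A = {u \<in> carrier U. (\<lambda>(a::'a, x::'g). x) u = \<one>\<^bsub>G\<^esub>}"
    using D1 by (auto simp: U_carrier)
  have epipi: "epimorphism U SS pi"
    unfolding epimorphism_def hom_def using pi_in pi_mult S_sub by force
  have epik: "epimorphism SS G (\<lambda>(e::'a, x::'g). x)"
    unfolding epimorphism_def hom_def
  proof (intro conjI CollectI)
    show "(\<lambda>(a::'a, x::'g). x) \<in> carrier SS \<rightarrow> carrier G" by (auto simp: S_carrier)
    show "\<forall>u\<in>carrier SS. \<forall>v\<in>carrier SS. (\<lambda>(a::'a, x::'g). x) (u \<otimes>\<^bsub>SS\<^esub> v) =
       (\<lambda>(a::'a, x::'g). x) u \<otimes>\<^bsub>G\<^esub> (\<lambda>(a::'a, x::'g). x) v" by (auto simp: S_mult)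
    show "(\<lambda>(a::'a, x::'g). x) ` carrier SS = carrier G"
    proof
      show "(\<lambda>(a::'a, x::'g). x) ` carrier SS \<subseteq> carrier G" by (auto simp: S_carrier)
      show "carrier G \<subseteq> (\<lambda>(a::'a, x::'g). x) ` carrier SS"
      proof
        fix x assume x: "x \<in> carrier G"
        then obtain a where a: "a \<in> D x" using Dne by blast
        then have "(a \<cdot> si a, x) \<in> carrier SS" using pi_in[of "(a, x)"] x unfolding pi_def by (simp add: U_carrier)
        then show "x \<in> (\<lambda>(a::'a, x::'g). x) ` carrier SS" by force
      qed
    qed
  qed
  have injpi: "inj_on pi (idems U)"
  proof -
    have "\<forall>u\<in>idems U. pi u = u" using idemsU unfolding pi_def idems_def by (auto simp: si_idem)
    then show ?thesis by (metis inj_onI)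
  qed
  have ipi: "(\<lambda>a. (a, \<one>\<^bsub>G\<^esub>)) ` carrier A = {u \<in> carrier U. pi u \<in> idems SS}"
  proof
    show "(\<lambda>a. (a, \<one>\<^bsub>G\<^esub>)) ` carrier A \<subseteq> {u \<in> carrier U. pi u \<in> idems SS}"
    proof
      fix u assume "u \<in> (\<lambda>a. (a, \<one>\<^bsub>G\<^esub>)) ` carrier A"
      then obtain a where u: "u = (a, \<one>\<^bsub>G\<^esub>)" and a: "a \<in> carrier A" by blast
      have uU: "u \<in> carrier U" using u a D1 by (simp add: U_carrier)
      define e where "e = a \<cdot> si a"
      have e: "e \<in> carrier A" "e \<cdot> e = e" using e_def a idem1 by auto
      have "(e, \<one>\<^bsub>G\<^esub>) \<otimes>\<^bsub>SS\<^esub> (e, \<one>\<^bsub>G\<^esub>) = (e, \<one>\<^bsub>G\<^esub>)" using S_mult th'1 th1 e by simp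
      then show "u \<in> {u \<in> carrier U. pi u \<in> idems SS}"
        using uU pi_in[OF uU] u unfolding idems_def pi_def e_def by simp
    qed
    show "{u \<in> carrier U. pi u \<in> idems SS} \<subseteq> (\<lambda>a. (a, \<one>\<^bsub>G\<^esub>)) ` carrier A"
    proof
      fix u assume u: "u \<in> {u \<in> carrier U. pi u \<in> idems SS}"
      then obtain a x where ax: "u = (a, x)" "x \<in> carrier G" "a \<in> D x" by (auto simp: U_carrier)
      then have "x = \<one>\<^bsub>G\<^esub>" using idemsS u unfolding pi_def by fastforce
      then show "u \<in> (\<lambda>a. (a, \<one>\<^bsub>G\<^esub>)) ` carrier A" using ax D1 by auto
    qed
  qed
  show ?thesis unfolding group_extension_def semigroup_extension_def
    using U_inv grp mono epij ij epipi epik injpi ipi S_inv by (auto simp: pi_def)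
qed

end

theorem proposition5p15:
  fixes G :: "('g,'c) monoid_scheme" and A :: "('a,'b) monoid_scheme"
    and D :: "'g \<Rightarrow> 'a set" and \<theta> :: "'g \<Rightarrow> 'a \<Rightarrow> 'a"
    and w :: "'g \<Rightarrow> 'g \<Rightarrow> ('a \<Rightarrow> 'a) \<times> ('a \<Rightarrow> 'a)"
  assumes "group G"
    and "semilattice_of_groups A"
    and "twisted_partial_action G A D \<theta> w"
  defines "i \<equiv> (\<lambda>a. (a, \<one>\<^bsub>G\<^esub>))"
    and "j \<equiv> (\<lambda>(a::'a, x::'g). x)"
    and "\<pi> \<equiv> (\<lambda>(a, x::'g). (a \<otimes>\<^bsub>A\<^esub> sinv A a, x))"
    and "\<kappa> \<equiv> (\<lambda>(e::'a, x::'g). x)"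
  shows "group_extension A (crossed_product G A D \<theta> w) G i j
    \<and> epimorphism (crossed_product G A D \<theta> w) (idem_crossed_product G A D \<theta>) \<pi>
    \<and> epimorphism (idem_crossed_product G A D \<theta>) G \<kappa>
    \<and> semigroup_extension A (crossed_product G A D \<theta> w) (idem_crossed_product G A D \<theta>) i \<pi>
    \<and> (\<forall>u\<in>carrier (crossed_product G A D \<theta> w). j u = \<kappa> (\<pi> u))"
  proof -
  interpret tpa A G D \<theta> w
    by (intro tpa.intro cliff.intro tpa_axioms.intro) (fact assms)+
  show ?thesis using main unfolding i_def j_def \<pi>_def \<kappa>_def pi_def by simp
qed

end
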